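(* Let $A, m, e$ be constants and $\Lambda$ a constant, and on a region with coordinates $(y,x,\phi)$ where $F>0$ and $G>0$ consider the Riemannian metric \[ h_\Lambda = \frac{1}{F^2}\,dy^2 + \frac{1}{GF}\,dx^2 + \frac{G}{F}\,d\phi^2, \] with \[ F = F_\Lambda(y) = y^2 - 2mAy^3 + e^2A^2y^4 - 1 - \frac{\Lambda}{3A^2},\qquad G(x) = 1 - x^2 - 2mAx^3 - e^2A^2x^4 . \] Then for any two values $\Lambda_1,\Lambda_2$ (on a common domain where the metrics are defined) the metrics $h_{\Lambda_1}$ and $h_{\Lambda_2}$ are projectively equivalent via the identity map, i.e. they have the same unparametrised geodesics. In particular, the null geodesics of the cosmological $C$-metric \[ g = \frac{1}{A^2(x^2+y^2)}\Big(-F\,dt^2 + \frac{1}{F}dy^2 + \frac{1}{G}dx^2 + G\,d\phi^2\Big) \] project to curves (the unparametrised geodesics of its optical metric $h_\Lambda$) that do not depend on $\Lambda$.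
   Context: The metric $h_\Lambda$ is the optical metric of the cosmological $C$-metric $g$ with respect to the static Killing vector $\partial/\partial t$ (i.e. $g = V^2(-dt^2 + h_\Lambda)$ with $V^2 = F/(A^2(x^2+y^2))$). Two metrics are projectively equivalent if they share the same unparametrised geodesics; equivalently their Levi-Civita connections satisfy $\tilde\Gamma^i_{jk} = \Gamma^i_{jk} + \delta^i_j\omega_k + \delta^i_k\omega_j$ for some one-form $\omega$. *)

theory Defs
  imports "HOL-Analysis.Analysis"
begin

text \<open>Coordinates on a region of R^3: a point p :: real^3 has
  p$1 = y, p$2 = x, p$3 = phi.  A (pseudo-)Riemannian metric in these
  coordinates is a matrix-valued function g :: real^3 => real^3^3.\<close>

definition partial :: "(real^3 \<Rightarrow> real) \<Rightarrow> 3 \<Rightarrow> real^3 \<Rightarrow> real" where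
  "partial f i p = deriv (\<lambda>t. f (p + t *\<^sub>R axis i 1)) 0"

definition christoffel :: "(real^3 \<Rightarrow> real^3^3) \<Rightarrow> real^3 \<Rightarrow> 3 \<Rightarrow> 3 \<Rightarrow> 3 \<Rightarrow> real" where
  "christoffel g p i j k =
     (1/2) * (\<Sum>l\<in>UNIV. (matrix_inv (g p)) $ i $ l *
        (partial (\<lambda>q. g q $ l $ k) j p + partial (\<lambda>q. g q $ l $ j) k p
         - partial (\<lambda>q. g q $ j $ k) l p))"

definition proj_equiv_on :: "(real^3) set \<Rightarrow> (real^3 \<Rightarrow> real^3^3) \<Rightarrow> (real^3 \<Rightarrow> real^3^3) \<Rightarrow> bool" where
  "proj_equiv_on U g1 g2 \<longleftrightarrow>
     (\<exists>\<omega> :: real^3 \<Rightarrow> 3 \<Rightarrow> real. \<forall>p\<in>U. \<forall>i j k.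
        christoffel g2 p i j k = christoffel g1 p i j k
          + (if i = j then \<omega> p k else 0) + (if i = k then \<omega> p j else 0))"

definition F_Lam :: "real \<Rightarrow> real \<Rightarrow> real \<Rightarrow> real \<Rightarrow> real \<Rightarrow> real" where
  "F_Lam A m e \<Lambda> y = y^2 - 2*m*A*y^3 + e^2*A^2*y^4 - 1 - \<Lambda> / (3*A^2)"

definition G_fun :: "real \<Rightarrow> real \<Rightarrow> real \<Rightarrow> real \<Rightarrow> real" where
  "G_fun A m e x = 1 - x^2 - 2*m*A*x^3 - e^2*A^2*x^4"

definition h_Lam :: "real \<Rightarrow> real \<Rightarrow> real \<Rightarrow> real \<Rightarrow> real^3 \<Rightarrow> real^3^3" where
  "h_Lam A m e \<Lambda> p = (\<chi> i j. if i \<noteq> j then 0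
      else if i = 1 then 1 / (F_Lam A m e \<Lambda> (p$1))^2
      else if i = 2 then 1 / (G_fun A m e (p$2) * F_Lam A m e \<Lambda> (p$1))
      else G_fun A m e (p$2) / F_Lam A m e \<Lambda> (p$1))"

end

theory Submission imports Defs begin

lemma matrix_inv_eq:
  fixes A B :: "real^'n^'n"
  assumes "A ** B = mat 1" "B ** A = mat 1"
  shows "matrix_inv A = B"
proof -
  have ex: "\<exists>A'. A ** A' = mat 1 \<and> A' ** A = mat 1" using assms by blast
  let ?C = "matrix_inv A"
  have c: "A ** ?C = mat 1 \<and> ?C ** A = mat 1"
    unfolding matrix_inv_def by (rule someI_ex[OF ex])
  have "?C = ?C ** (A ** B)" using assms by (simp add: matrix_mul_rid)
  also have "\<dots> = (?C ** A) ** B" by (simp add: matrix_mul_assoc)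
  also have "\<dots> = B" using c by (simp add: matrix_mul_lid)
  finally show ?thesis .
qed

lemma matrix_inv_diag:
  fixes d :: "'n::finite \<Rightarrow> real"
  assumes "\<And>i. d i \<noteq> 0"
  shows "matrix_inv (\<chi> i j. if i = j then d i else 0) = (\<chi> i j. if i = j then 1 / d i else 0)"
  apply (rule matrix_inv_eq)
  using assms by (auto simp: matrix_matrix_mult_def mat_def vec_eq_iff if_distrib[of "\<lambda>x. x * _"] sum.delta cong: if_cong)

lemma comp_axis: "(p + t *\<^sub>R axis i 1) $ k = p $ k + (if k = i then t else (0::real))"
  by (simp add: axis_def)

lemma partial_prod:
  fixes a b :: "real \<Rightarrow> real"
  assumes "a differentiable at (p$1)" "b differentiable at (p$2)"
  shows "partial (\<lambda>q. a (q$1) * b (q$2)) 1 p = deriv a (p$1) * b (p$2)"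
    "partial (\<lambda>q. a (q$1) * b (q$2)) 2 p = a (p$1) * deriv b (p$2)"
    "partial (\<lambda>q. a (q$1) * b (q$2)) 3 p = 0"
proof -
  have da: "(a has_real_derivative deriv a (p$1)) (at (p$1))"
    using assms(1) DERIV_deriv_iff_real_differentiable by blast
  have db: "(b has_real_derivative deriv b (p$2)) (at (p$2))"
    using assms(2) DERIV_deriv_iff_real_differentiable by blast
  have "((\<lambda>t. a (p$1 + t)) has_real_derivative deriv a (p$1)) (at 0)"
    using DERIV_shift[of a "deriv a (p$1)" 0 "p$1"] da by (simp add: add.commute)
  hence "((\<lambda>t. a (p$1 + t) * b (p$2)) has_real_derivative deriv a (p$1) * b (p$2)) (at 0)"
    by (rule DERIV_cmult_right)
  thus "partial (\<lambda>q. a (q$1) * b (q$2)) 1 p = deriv a (p$1) * b (p$2)"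
    unfolding partial_def comp_axis by (simp add: DERIV_imp_deriv)
  have "((\<lambda>t. b (p$2 + t)) has_real_derivative deriv b (p$2)) (at 0)"
    using DERIV_shift[of b "deriv b (p$2)" 0 "p$2"] db by (simp add: add.commute)
  hence "((\<lambda>t. a (p$1) * b (p$2 + t)) has_real_derivative a (p$1) * deriv b (p$2)) (at 0)"
    by (rule DERIV_cmult)
  thus "partial (\<lambda>q. a (q$1) * b (q$2)) 2 p = a (p$1) * deriv b (p$2)"
    unfolding partial_def comp_axis by (simp add: DERIV_imp_deriv)
  show "partial (\<lambda>q. a (q$1) * b (q$2)) 3 p = 0"
    unfolding partial_def comp_axis by simp
qed

lemma partial_const: "partial (\<lambda>q. c) i p = 0"
  unfolding partial_def by simp

definition hm :: "(real \<Rightarrow> real) \<Rightarrow> (real \<Rightarrow> real) \<Rightarrow> real^3 \<Rightarrow> real^3^3" where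
  "hm F G p = (\<chi> i j. if i \<noteq> j then 0
      else if i = 1 then 1 / (F (p$1))^2
      else if i = 2 then 1 / (G (p$2) * F (p$1))
      else G (p$2) / F (p$1))"

lemma h_Lam_hm: "h_Lam A m e \<Lambda> = hm (F_Lam A m e \<Lambda>) (G_fun A m e)"
  by (simp add: fun_eq_iff h_Lam_def hm_def)

lemma deriv_inv2:
  fixes F :: "real \<Rightarrow> real"
  assumes "F differentiable at y" "F y \<noteq> 0"
  shows "((\<lambda>y. 1 / F y ^ 2) has_real_derivative - 2 * deriv F y / F y ^ 3) (at y)"
proof -
  have d: "(F has_real_derivative deriv F y) (at y)"
    using assms(1) DERIV_deriv_iff_real_differentiable by blast
  show ?thesis
  proof -
    have "((\<lambda>y. inverse (F y ^ 2)) has_real_derivative - ((of_nat 2 * (deriv F y * F y ^ (2 - Suc 0))) * inverse ((F y ^ 2) ^ Suc (Suc 0)))) (at y)"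
      by (rule DERIV_inverse_fun[OF DERIV_power[OF d]]) (use assms(2) in simp)
    moreover have "- ((of_nat 2 * (deriv F y * F y ^ (2 - Suc 0))) * inverse ((F y ^ 2) ^ Suc (Suc 0))) = - 2 * deriv F y / F y ^ 3"
      using assms(2) by (simp add: field_simps power2_eq_square power3_eq_cube)
    moreover have "(\<lambda>y. inverse (F y ^ 2)) = (\<lambda>y. 1 / F y ^ 2)" by (simp add: divide_inverse)
    ultimately show ?thesis by simp
  qed
qed

lemma deriv_inv1:
  fixes F :: "real \<Rightarrow> real"
  assumes "F differentiable at y" "F y \<noteq> 0"
  shows "((\<lambda>y. 1 / F y) has_real_derivative - deriv F y / F y ^ 2) (at y)"
proof -
  have d: "(F has_real_derivative deriv F y) (at y)"
    using assms(1) DERIV_deriv_iff_real_differentiable by blast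
  show ?thesis
  proof -
    have "((\<lambda>y. inverse (F y)) has_real_derivative - (deriv F y * inverse (F y ^ Suc (Suc 0)))) (at y)"
      by (rule DERIV_inverse_fun[OF d]) (use assms(2) in simp)
    moreover have "- (deriv F y * inverse (F y ^ Suc (Suc 0))) = - deriv F y / F y ^ 2"
      using assms(2) by (simp add: field_simps power2_eq_square)
    moreover have "(\<lambda>y. inverse (F y)) = (\<lambda>y. 1 / F y)" by (simp add: divide_inverse)
    ultimately show ?thesis by simp
  qed
qed

lemma partial_hm:
  fixes F G :: "real \<Rightarrow> real"
  assumes dF: "F differentiable at (p$1)" and dG: "G differentiable at (p$2)"
    and nF: "F (p$1) \<noteq> 0" and nG: "G (p$2) \<noteq> 0"
  shows "partial (\<lambda>q. hm F G q $ l $ k) j p =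
    (if l \<noteq> k then 0
     else if l = 1 then (if j = 1 then - 2 * deriv F (p$1) / F (p$1) ^ 3 else 0)
     else if l = 2 then (if j = 1 then - deriv F (p$1) / F (p$1) ^ 2 * (1 / G (p$2))
                         else if j = 2 then (1 / F (p$1)) * (- deriv G (p$2) / G (p$2) ^ 2) else 0)
     else (if j = 1 then - deriv F (p$1) / F (p$1) ^ 2 * G (p$2)
           else if j = 2 then (1 / F (p$1)) * deriv G (p$2) else 0))"
proof -
  have a2: "(\<lambda>y. 1 / F y ^ 2) differentiable at (p$1)"
    using deriv_inv2[OF dF nF] real_differentiable_def by blast
  have a1: "(\<lambda>y. 1 / F y) differentiable at (p$1)"
    using deriv_inv1[OF dF nF] real_differentiable_def by blast
  have b1: "(\<lambda>x. 1 / G x) differentiable at (p$2)"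
    using deriv_inv1[OF dG nG] real_differentiable_def by blast
  have c: "(\<lambda>x::real. 1::real) differentiable at (p$2)" by simp
  have e2: "deriv (\<lambda>y. 1 / F y ^ 2) (p$1) = - 2 * deriv F (p$1) / F (p$1) ^ 3"
    using deriv_inv2[OF dF nF] DERIV_imp_deriv by blast
  have e1: "deriv (\<lambda>y. 1 / F y) (p$1) = - deriv F (p$1) / F (p$1) ^ 2"
    using deriv_inv1[OF dF nF] DERIV_imp_deriv by blast
  have eg: "deriv (\<lambda>y. 1 / G y) (p$2) = - deriv G (p$2) / G (p$2) ^ 2"
    using deriv_inv1[OF dG nG] DERIV_imp_deriv by blast
  have f11: "(\<lambda>q. hm F G q $ 1 $ 1) = (\<lambda>q. (\<lambda>y. 1 / F y ^ 2) (q$1) * (\<lambda>x. 1) (q$2))"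
    by (simp add: hm_def)
  have f22: "(\<lambda>q. hm F G q $ 2 $ 2) = (\<lambda>q. (\<lambda>y. 1 / F y) (q$1) * (\<lambda>x. 1 / G x) (q$2))"
    by (simp add: hm_def mult.commute)
  have f33: "(\<lambda>q. hm F G q $ 3 $ 3) = (\<lambda>q. (\<lambda>y. 1 / F y) (q$1) * G (q$2))"
    by (simp add: hm_def)
  note P11 = partial_prod[of "\<lambda>y. 1 / F y ^ 2" p "\<lambda>x. 1", OF a2 c]
  note P22 = partial_prod[of "\<lambda>y. 1 / F y" p "\<lambda>x. 1 / G x", OF a1 b1]
  note P33 = partial_prod[of "\<lambda>y. 1 / F y" p G, OF a1 dG]
  show ?thesis
  proof (cases "l = k")
    case False
    hence "(\<lambda>q. hm F G q $ l $ k) = (\<lambda>q. 0)" by (simp add: hm_def)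
    thus ?thesis using False by (simp add: partial_const)
  next
    case True
    show ?thesis
      using exhaust_3[of k] exhaust_3[of j] True
      apply (elim disjE)
      by (simp_all only: f11 f22 f33 P11 P22 P33 e1 e2 eg) simp_all
  qed
qed

lemma inv_hm:
  assumes nF: "F (p$1) \<noteq> 0" and nG: "G (p$2) \<noteq> 0"
  shows "matrix_inv (hm F G p) $ i $ l = (if i = l then 1 / (hm F G p $ i $ i) else 0)"
proof -
  have eq: "hm F G p = (\<chi> i j. if i = j then hm F G p $ i $ i else 0)"
    by (simp add: hm_def vec_eq_iff)
  have nz: "\<And>i. hm F G p $ i $ i \<noteq> 0"
    subgoal for i using exhaust_3[of i] nF nG by (auto simp: hm_def)
    done
  show ?thesis
    by (subst eq, subst matrix_inv_diag[OF nz]) simp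
qed

lemma main_abs:
  fixes F1 F2 G :: "real \<Rightarrow> real"
  assumes d1: "\<And>y. F1 differentiable at y" and d2: "\<And>y. F2 differentiable at y"
    and dG: "\<And>x. G differentiable at x"
    and de: "\<And>y. deriv F1 y = deriv F2 y"
  shows "proj_equiv_on {p. F1 (p$1) > 0 \<and> F2 (p$1) > 0 \<and> G (p$2) > 0} (hm F1 G) (hm F2 G)"
  unfolding proj_equiv_on_def
proof (rule exI[of _ "\<lambda>p k. if k = 1 then (deriv F1 (p$1) / F1 (p$1) - deriv F1 (p$1) / F2 (p$1)) / 2 else 0"], 
       intro ballI allI)
  fix p :: "real^3" and i j k :: 3
  assume "p \<in> {p. F1 (p$1) > 0 \<and> F2 (p$1) > 0 \<and> G (p$2) > 0}"
  hence p1: "F1 (p$1) > 0" and p2: "F2 (p$1) > 0" and pG: "G (p$2) > 0" by auto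
  note c1 = christoffel_def[of "hm F1 G"] sum_3 inv_hm[of F1 p G] partial_hm[OF d1 dG, of p]
  note c2 = christoffel_def[of "hm F2 G"] inv_hm[of F2 p G] partial_hm[OF d2 dG, of p]
  show "christoffel (hm F2 G) p i j k = christoffel (hm F1 G) p i j k
          + (if i = j then (if k = 1 then (deriv F1 (p$1) / F1 (p$1) - deriv F1 (p$1) / F2 (p$1)) / 2 else 0) else 0)
          + (if i = k then (if j = 1 then (deriv F1 (p$1) / F1 (p$1) - deriv F1 (p$1) / F2 (p$1)) / 2 else 0) else 0)"
    using exhaust_3[of i] exhaust_3[of j] exhaust_3[of k] p1 p2 pG
    apply (simp only: c1 c2 de)
    apply (elim disjE)
    by (simp_all add: hm_def field_simps power2_eq_square power3_eq_cube)
qed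

lemma F_Lam_deriv:
  "(F_Lam A m e \<Lambda> has_real_derivative (2*y - 6*m*A*y^2 + 4*e^2*A^2*y^3)) (at y)"
  unfolding F_Lam_def[abs_def]
  by (rule derivative_eq_intros refl)+ (simp add: algebra_simps power2_eq_square power3_eq_cube)

lemma G_fun_diff: "G_fun A m e differentiable at x"
  unfolding G_fun_def[abs_def] by (intro derivative_intros)

theorem mainTheorem6:
  fixes A m e \<Lambda>1 \<Lambda>2 :: real
  shows "proj_equiv_on
           {p. F_Lam A m e \<Lambda>1 (p$1) > 0 \<and> F_Lam A m e \<Lambda>2 (p$1) > 0 \<and> G_fun A m e (p$2) > 0}
           (h_Lam A m e \<Lambda>1) (h_Lam A m e \<Lambda>2)"
  unfolding h_Lam_hm
proof (rule main_abs)
  show "\<And>y. F_Lam A m e \<Lambda>1 differentiable at y" "\<And>y. F_Lam A m e \<Lambda>2 differentiable at y"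
    using F_Lam_deriv real_differentiable_def by blast+
  show "\<And>x. G_fun A m e differentiable at x" by (rule G_fun_diff)
  show "\<And>y. deriv (F_Lam A m e \<Lambda>1) y = deriv (F_Lam A m e \<Lambda>2) y"
    using F_Lam_deriv DERIV_imp_deriv by metis
qed

end
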